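(* Let $p$ be prime, $\mathbf k$ algebraically closed of characteristic $p$, $S=\mathbf k[x,y]$, $\mathfrak m=\langle x,y\rangle$, $d\ge1$ and $c\in C(d,2,p)$. Let $\mathcal Z(c,d)=\{0=t_0<t_1<\dots<t_\ell\}$ and let $\delta_{t_0},\dots,\delta_{t_\ell}$ be the type-$c$ segmentation of $d$. Then $$I_{c,d}=\big(\mathfrak m^{\mathrm{Cont}(\delta_{t_0})}\big)^{[p^{t_0}]}\big(\mathfrak m^{\mathrm{Cont}(\delta_{t_1})}\big)^{[p^{t_1}]}\cdots\big(\mathfrak m^{\mathrm{Cont}(\delta_{t_\ell})}\big)^{[p^{t_\ell}]}.$$ In particular, the minimal monomial generators of $I_{c,d}$ are exactly the monomials $x^ay^{d-a}$ with $a=w_0p^{t_0}+w_1p^{t_1}+\cdots+w_\ell p^{t_\ell}$ for integers $0\le w_r\le\mathrm{Cont}(\delta_{t_r})$.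
   Context: Base-$p$ expansion $d=\sum_{j=0}^Md_jp^j$, $0\le d_j\le p-1$, $d_M\ne0$. The carry pattern $(c_1,\dots,c_M)$ of a monomial $x^ay^b$ of degree $d$ is determined by $\sum_{j<\ell}(a_j+b_j)p^j=c_\ell p^\ell+\sum_{j<\ell}d_jp^j$ for $1\le\ell\le M$ ($a_j,b_j$ base-$p$ digits; $c_i=0$ for $i<1$ or $i>M$). $C(d,2,p)$ is the set of carry patterns of degree-$d$ monomials in two variables, ordered componentwise; $I_{c,d}$ is the ideal generated by all degree-$d$ monomials with carry pattern $\le c$. Define $\mathcal Z(c,d)=\{0\le k\le M: c_k=0,\ (c_{k-1},d_{k-1})\ne(0,p-1)\}$, with the convention that $0\in\mathcal Z(c,d)$; write it as $\{0=t_0<t_1<\dots<t_\ell\}$ and set $t_{\ell+1}=M+1$. For $0\le a$ with base-$p$ digits $a_j$, the $c$-segment of $a$ starting at $t_r$ is $a_{[t_r,t_{r+1})}=(a_{t_r},\dots,a_{t_{r+1}-1})$, and its content is $\mathrm{Cont}(a_{[t_r,t_{r+1})})=\sum_{k=t_r}^{t_{r+1}-1}a_kp^{k-t_r}$. Write $\delta_{t_r}=d_{[t_r,t_{r+1})}$; $\{\delta_{t_0},\dots,\delta_{t_\ell}\}$ is the type-$c$ segmentation of $d$. For an ideal $J=\langle f_1,\dots,f_s\rangle$, $J^{[p^e]}=\langle f_1^{p^e},\dots,f_s^{p^e}\rangle$. *)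

theory Defs
  imports "HOL-Computational_Algebra.Polynomial"
begin

definition digit :: "nat \<Rightarrow> nat \<Rightarrow> nat \<Rightarrow> nat" where
  "digit p n j = n div p ^ j mod p"

definition top_index :: "nat \<Rightarrow> nat \<Rightarrow> nat" where
  "top_index p d = (GREATEST j. digit p d j \<noteq> 0)"

text \<open>Carry pattern (c_1,...,c_M) of x^a y^b in degree d, as a function
  nat => nat which is 0 outside [1,M]; c_l is determined by
  sum_{j<l} (a_j+b_j) p^j = c_l p^l + sum_{j<l} d_j p^j.\<close>
definition carry :: "nat \<Rightarrow> nat \<Rightarrow> nat \<Rightarrow> nat \<Rightarrow> nat \<Rightarrow> nat" where
  "carry p d a b l =
     (if 1 \<le> l \<and> l \<le> top_index p d then
        ((\<Sum>j<l. (digit p a j + digit p b j) * p ^ j) - (\<Sum>j<l. digit p d j * p ^ j)) div p ^ l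
      else 0)"

definition carry_patterns :: "nat \<Rightarrow> nat \<Rightarrow> (nat \<Rightarrow> nat) set" where
  "carry_patterns d p = {carry p d a b | a b. a + b = d}"

definition pat_le :: "(nat \<Rightarrow> nat) \<Rightarrow> (nat \<Rightarrow> nat) \<Rightarrow> bool" where
  "pat_le c' c \<longleftrightarrow> (\<forall>i. c' i \<le> c i)"

text \<open>The set Z(c,d) (with the convention 0 \<in> Z(c,d); c_0 = 0).\<close>
definition Zset :: "nat \<Rightarrow> nat \<Rightarrow> (nat \<Rightarrow> nat) \<Rightarrow> nat set" where
  "Zset p d c = {0} \<union> {k. k \<le> top_index p d \<and> c k = 0 \<and>
       (1 \<le> k \<longrightarrow> \<not> (c (k - 1) = 0 \<and> digit p d (k - 1) = p - 1))}"

text \<open>Successor t_{r+1} of t_r in Z(c,d), with t_{l+1} = M+1.\<close>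
definition next_t :: "nat \<Rightarrow> nat \<Rightarrow> (nat \<Rightarrow> nat) \<Rightarrow> nat \<Rightarrow> nat" where
  "next_t p d c t = (if \<exists>s\<in>Zset p d c. t < s then (LEAST s. s \<in> Zset p d c \<and> t < s)
                     else top_index p d + 1)"

definition cont :: "nat \<Rightarrow> nat \<Rightarrow> nat \<Rightarrow> nat \<Rightarrow> nat" where
  "cont p a s e = (\<Sum>k\<in>{s..<e}. digit p a k * p ^ (k - s))"

text \<open>Content of delta_t, the type-c segment of d starting at t.\<close>
definition seg_cont :: "nat \<Rightarrow> nat \<Rightarrow> (nat \<Rightarrow> nat) \<Rightarrow> nat \<Rightarrow> nat" where
  "seg_cont p d c t = cont p d t (next_t p d c t)"

section \<open>The ring S = k[x,y], rendered as ('a poly) poly, and its ideals\<close>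

definition varX :: "'a::comm_ring_1 poly poly" where
  "varX = monom 1 1"

definition varY :: "'a::comm_ring_1 poly poly" where
  "varY = [:monom 1 1:]"

definition mon :: "nat \<Rightarrow> nat \<Rightarrow> 'a::comm_ring_1 poly poly" where
  "mon i j = varX ^ i * varY ^ j"

definition ideal_gen :: "'b::comm_ring_1 set \<Rightarrow> 'b set" where
  "ideal_gen G = {f. \<exists>A r. finite A \<and> A \<subseteq> G \<and> f = (\<Sum>g\<in>A. r g * g)}"

definition ideal_prod :: "'i set \<Rightarrow> ('i \<Rightarrow> 'b::comm_ring_1 set) \<Rightarrow> 'b set" where
  "ideal_prod T I = ideal_gen {\<Prod>t\<in>T. f t | f. \<forall>t\<in>T. f t \<in> I t}"

definition ideal_pow :: "'b::comm_ring_1 set \<Rightarrow> nat \<Rightarrow> 'b set" where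
  "ideal_pow I n = ideal_prod {..<n} (\<lambda>_. I)"

definition frob_pow :: "'b::comm_ring_1 set \<Rightarrow> nat \<Rightarrow> 'b set" where
  "frob_pow J q = ideal_gen ((\<lambda>f. f ^ q) ` J)"

definition max_ideal :: "'a::comm_ring_1 poly poly set" where
  "max_ideal = ideal_gen {varX, varY}"

definition Icd :: "nat \<Rightarrow> nat \<Rightarrow> (nat \<Rightarrow> nat) \<Rightarrow> 'a::comm_ring_1 poly poly set" where
  "Icd p d c = ideal_gen {mon a b | a b. a + b = d \<and> pat_le (carry p d a b) c}"

definition min_mon_gens :: "'a::comm_ring_1 poly poly set \<Rightarrow> (nat \<times> nat) set" where
  "min_mon_gens I = {(i, j). mon i j \<in> I \<and>
      (\<forall>i' j'. i' \<le> i \<and> j' \<le> j \<and> (i', j') \<noteq> (i, j) \<longrightarrow> mon i' j' \<notin> I)}"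

end

theory Submission
  imports Defs "HOL-Computational_Algebra.Primes"
begin


lemma ig_mem: "g \<in> G \<Longrightarrow> g \<in> ideal_gen G"
  unfolding ideal_gen_def by (rule CollectI, rule exI[of _ "{g}"], rule exI[of _ "\<lambda>_. 1"]) simp

lemma ig_zero: "0 \<in> ideal_gen G"
  unfolding ideal_gen_def by (rule CollectI, rule exI[of _ "{}"]) simp

lemma ig_add:
  assumes "f \<in> ideal_gen G" "h \<in> ideal_gen G" shows "f + h \<in> ideal_gen G"
proof -
  obtain A r where A: "finite A" "A \<subseteq> G" "f = (\<Sum>g\<in>A. r g * g)" using assms(1) unfolding ideal_gen_def by blast
  obtain B s where B: "finite B" "B \<subseteq> G" "h = (\<Sum>g\<in>B. s g * g)" using assms(2) unfolding ideal_gen_def by blast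
  define r' where "r' g = (if g \<in> A then r g else 0) + (if g \<in> B then s g else 0)" for g
  have "(\<Sum>g\<in>A \<union> B. r' g * g) = (\<Sum>g\<in>A \<union> B. (if g \<in> A then r g * g else 0)) + (\<Sum>g\<in>A \<union> B. (if g \<in> B then s g * g else 0))"
    unfolding sum.distrib[symmetric] by (intro sum.cong) (auto simp: r'_def distrib_right)
  also have "(\<Sum>g\<in>A \<union> B. (if g \<in> A then r g * g else 0)) = f"
    unfolding A(3) using A B by (intro sum.mono_neutral_cong_right) auto
  also have "(\<Sum>g\<in>A \<union> B. (if g \<in> B then s g * g else 0)) = h"
    unfolding B(3) using A B by (intro sum.mono_neutral_cong_right) auto
  finally have eq: "f + h = (\<Sum>g\<in>A \<union> B. r' g * g)" by simp
  show ?thesis unfolding ideal_gen_def mem_Collect_eq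
    by (rule exI[of _ "A \<union> B"], rule exI[of _ r']) (use A B eq in auto)
qed

lemma ig_mult: assumes "f \<in> ideal_gen G" shows "r * f \<in> ideal_gen G"
proof -
  obtain A s where A: "finite A" "A \<subseteq> G" "f = (\<Sum>g\<in>A. s g * g)" using assms unfolding ideal_gen_def by blast
  have eq: "r * f = (\<Sum>g\<in>A. (r * s g) * g)" using A by (simp add: sum_distrib_left mult.assoc)
  show ?thesis unfolding ideal_gen_def mem_Collect_eq
    by (rule exI[of _ A], rule exI[of _ "\<lambda>g. r * s g"]) (use A eq in auto)
qed

lemma ig_sum: "finite A \<Longrightarrow> (\<And>i. i \<in> A \<Longrightarrow> f i \<in> ideal_gen G) \<Longrightarrow> sum f A \<in> ideal_gen G"
  by (induction A rule: finite_induct) (auto intro: ig_zero ig_add)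

lemma ig_least: assumes "G \<subseteq> ideal_gen H" shows "ideal_gen G \<subseteq> ideal_gen H"
proof
  fix f assume "f \<in> ideal_gen G"
  then obtain A s where A: "finite A" "A \<subseteq> G" "f = (\<Sum>g\<in>A. s g * g)" unfolding ideal_gen_def by blast
  show "f \<in> ideal_gen H" unfolding A(3) using A assms by (intro ig_sum ig_mult) auto
qed

lemma ig_eqI: "G \<subseteq> ideal_gen H \<Longrightarrow> H \<subseteq> ideal_gen G \<Longrightarrow> ideal_gen G = ideal_gen H"
  using ig_least by blast

lemma ig_mult2:
  assumes "a \<in> ideal_gen X" "b \<in> ideal_gen Y"
  shows "a * b \<in> ideal_gen {x * y |x y. x \<in> X \<and> y \<in> Y}"
proof -
  have *: "x * b \<in> ideal_gen {x * y |x y. x \<in> X \<and> y \<in> Y}" if "x \<in> X" for x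
  proof -
    obtain B s where B: "finite B" "B \<subseteq> Y" "b = (\<Sum>g\<in>B. s g * g)" using assms(2) unfolding ideal_gen_def by blast
    have "x * b = (\<Sum>g\<in>B. s g * (x * g))" using B by (simp add: sum_distrib_left algebra_simps)
    also have "\<dots> \<in> ideal_gen {x * y |x y. x \<in> X \<and> y \<in> Y}"
      using B that by (intro ig_sum ig_mult ig_mem) auto
    finally show ?thesis .
  qed
  obtain A r where A: "finite A" "A \<subseteq> X" "a = (\<Sum>g\<in>A. r g * g)" using assms(1) unfolding ideal_gen_def by blast
  have "a * b = (\<Sum>g\<in>A. r g * (g * b))" unfolding A(3) sum_distrib_right by (simp add: mult.assoc)
  also have "\<dots> \<in> ideal_gen {x * y |x y. x \<in> X \<and> y \<in> Y}"
  proof (rule ig_sum)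
    show "finite A" by (rule A(1))
    fix i assume "i \<in> A"
    hence "i \<in> X" using A(2) by blast
    thus "r i * (i * b) \<in> ideal_gen {x * y |x y. x \<in> X \<and> y \<in> Y}" by (rule ig_mult[OF *])
  qed
  finally show ?thesis .
qed

lemma prod_in_gen:
  "finite T \<Longrightarrow> (\<forall>t\<in>T. f t \<in> ideal_gen (G t)) \<Longrightarrow>
   (\<Prod>t\<in>T. f t) \<in> ideal_gen {\<Prod>t\<in>T. g t | g. \<forall>t\<in>T. g t \<in> G t}"
proof (induction T arbitrary: f rule: finite_induct)
  case empty
  then show ?case by (auto intro: ig_mem)
next
  case (insert x T)
  have e: "(\<Prod>t\<in>insert x T. f t) = f x * (\<Prod>t\<in>T. f t)" using insert by simp
  have m: "f x * (\<Prod>t\<in>T. f t) \<in> ideal_gen {u * v |u v. u \<in> G x \<and> v \<in> {\<Prod>t\<in>T. g t | g. \<forall>t\<in>T. g t \<in> G t}}"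
  proof (rule ig_mult2)
    show "f x \<in> ideal_gen (G x)" using insert.prems by simp
    show "(\<Prod>t\<in>T. f t) \<in> ideal_gen {\<Prod>t\<in>T. g t | g. \<forall>t\<in>T. g t \<in> G t}"
      using insert.prems by (intro insert.IH) simp
  qed
  have s: "ideal_gen {u * v |u v. u \<in> G x \<and> v \<in> {\<Prod>t\<in>T. g t | g. \<forall>t\<in>T. g t \<in> G t}} \<subseteq> ideal_gen {\<Prod>t\<in>insert x T. g t | g. \<forall>t\<in>insert x T. g t \<in> G t}"
  proof (rule ig_least, rule subsetI)
    fix z assume "z \<in> {u * v |u v. u \<in> G x \<and> v \<in> {\<Prod>t\<in>T. g t | g. \<forall>t\<in>T. g t \<in> G t}}"
    then obtain u v where uv: "u \<in> G x" "v \<in> {\<Prod>t\<in>T. g t | g. \<forall>t\<in>T. g t \<in> G t}" "z = u * v"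
      by (auto simp only: mem_Collect_eq)
    from uv(2) obtain g where g: "\<forall>t\<in>T. g t \<in> G t" "v = (\<Prod>t\<in>T. g t)"
      by (auto simp only: mem_Collect_eq)
    have ug: "u \<in> G x" "\<forall>t\<in>T. g t \<in> G t" "z = u * (\<Prod>t\<in>T. g t)" using uv g by simp_all
    have "(\<Prod>t\<in>insert x T. (g(x := u)) t) = u * (\<Prod>t\<in>T. (g(x := u)) t)" using insert by simp
    also have "(\<Prod>t\<in>T. (g(x := u)) t) = (\<Prod>t\<in>T. g t)" using insert by (intro prod.cong) auto
    finally have z_eq: "z = (\<Prod>t\<in>insert x T. (g(x := u)) t)" using ug by simp
    have all_in: "\<forall>t\<in>insert x T. (g(x := u)) t \<in> G t" using ug insert.hyps by auto
    have "\<exists>g'. z = (\<Prod>t\<in>insert x T. g' t) \<and> (\<forall>t\<in>insert x T. g' t \<in> G t)"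
    proof (intro exI conjI)
      show "z = (\<Prod>t\<in>insert x T. (g(x := u)) t)" by (rule z_eq)
      show "\<forall>t\<in>insert x T. (g(x := u)) t \<in> G t" by (rule all_in)
    qed
    thus "z \<in> ideal_gen {\<Prod>t\<in>insert x T. g t | g. \<forall>t\<in>insert x T. g t \<in> G t}"
      by (intro ig_mem) (simp only: mem_Collect_eq)
  qed
  show ?case unfolding e by (rule subsetD[OF s m])
qed

lemma ideal_prod_gen:
  assumes "finite T"
  shows "ideal_prod T (\<lambda>t. ideal_gen (G t)) = ideal_gen {\<Prod>t\<in>T. g t | g. \<forall>t\<in>T. g t \<in> G t}"
  unfolding ideal_prod_def
proof (rule ig_eqI)
  show "{\<Prod>t\<in>T. f t |f. \<forall>t\<in>T. f t \<in> ideal_gen (G t)} \<subseteq> ideal_gen {\<Prod>t\<in>T. g t |g. \<forall>t\<in>T. g t \<in> G t}"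
    using prod_in_gen[OF assms] by blast
  show "{\<Prod>t\<in>T. g t |g. \<forall>t\<in>T. g t \<in> G t} \<subseteq> ideal_gen {\<Prod>t\<in>T. f t |f. \<forall>t\<in>T. f t \<in> ideal_gen (G t)}"
  proof
    fix z assume "z \<in> {\<Prod>t\<in>T. g t |g. \<forall>t\<in>T. g t \<in> G t}"
    then obtain g where g: "\<forall>t\<in>T. g t \<in> G t" "z = (\<Prod>t\<in>T. g t)" by blast
    have "\<forall>t\<in>T. g t \<in> ideal_gen (G t)" using g(1) ig_mem by blast
    hence "z \<in> {\<Prod>t\<in>T. f t |f. \<forall>t\<in>T. f t \<in> ideal_gen (G t)}" using g(2) by blast
    thus "z \<in> ideal_gen {\<Prod>t\<in>T. f t |f. \<forall>t\<in>T. f t \<in> ideal_gen (G t)}" by (rule ig_mem)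
  qed
qed



lemma digit_sum: "x mod p ^ l = (\<Sum>j<l. digit p x j * p ^ j)"
proof (induction l)
  case 0 thus ?case by simp
next
  case (Suc l)
  have "x mod p ^ Suc l = x mod (p ^ l * p)" by (simp only: power_Suc2)
  also have "\<dots> = p ^ l * (x div p ^ l mod p) + x mod p ^ l" by (rule mod_mult2_eq)
  thus ?case using Suc by (simp add: digit_def mult.commute)
qed

lemma mod_Suc_digit: "x mod p ^ Suc k = x mod p ^ k + digit p x k * p ^ k"
proof -
  have "x mod p ^ Suc k = x mod (p ^ k * p)" by (simp only: power_Suc2)
  also have "\<dots> = p ^ k * (x div p ^ k mod p) + x mod p ^ k" by (rule mod_mult2_eq)
  finally show ?thesis by (simp add: digit_def mult.commute)
qed

lemma digits_zero: assumes "2 \<le> p" "\<forall>j. digit p x j = 0" shows "x = 0"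
proof -
  have "x < 2 ^ x" by (rule less_exp)
  also have "(2::nat) ^ x \<le> p ^ x" using assms(1) by (rule power_mono) simp
  finally have "x = x mod p ^ x" by simp
  also have "\<dots> = 0" unfolding digit_sum using assms(2) by simp
  finally show ?thesis .
qed

lemma digit_nz_bound: assumes "2 \<le> p" "digit p d j \<noteq> 0" shows "j < d"
proof -
  have "d div p ^ j \<noteq> 0" using assms(2) unfolding digit_def by (metis mod_0)
  hence "p ^ j \<le> d" by (simp add: div_eq_0_iff not_less)
  moreover have "j < 2 ^ j" by (rule less_exp)
  moreover have "(2::nat) ^ j \<le> p ^ j" using assms(1) by (rule power_mono) simp
  ultimately show ?thesis by linarith
qed

lemma top_ge: assumes "2 \<le> p" "digit p d j \<noteq> 0" shows "j \<le> top_index p d"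
  unfolding top_index_def using assms digit_nz_bound
  by (metis (mono_tags, lifting) Greatest_le_nat less_imp_le_nat)

lemma d_lt: assumes "2 \<le> p" shows "d < p ^ Suc (top_index p d)"
proof -
  define q where "q = d div p ^ Suc (top_index p d)"
  have "digit p q j = digit p d (Suc (top_index p d) + j)" for j
    unfolding q_def digit_def by (simp add: div_mult2_eq power_add)
  moreover have "digit p d (Suc (top_index p d) + j) = 0" for j
    using top_ge[OF assms, of d "Suc (top_index p d) + j"] by auto
  ultimately have "q = 0" using digits_zero[OF assms] by auto
  thus ?thesis unfolding q_def using assms by (simp add: div_eq_0_iff)
qed

lemma mod_carry:
  fixes P a d :: nat
  assumes "0 < P" "a \<le> d"
  shows "(a mod P + (d - a) mod P - d mod P) div P = (if a mod P \<le> d mod P then 0 else 1)"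
proof -
  define ra rb rd where "ra = a mod P" "rb = (d - a) mod P" "rd = d mod P"
  have lt: "ra < P" "rb < P" "rd < P" using assms unfolding ra_rb_rd_def by auto
  have "(ra + rb) mod P = (a + (d - a)) mod P" unfolding ra_rb_rd_def by (simp add: mod_add_eq)
  hence m: "(ra + rb) mod P = rd" using assms unfolding ra_rb_rd_def by simp
  have e: "ra + rb = P * ((ra + rb) div P) + rd" using m by (metis div_mult_mod_eq mult.commute)
  have "(ra + rb) div P < 2" using lt by (simp add: div_less_iff_less_mult)
  hence "(ra + rb) div P = 0 \<or> (ra + rb) div P = 1" by auto
  thus ?thesis
  proof
    assume "(ra + rb) div P = 0"
    hence "ra + rb = rd" using e by simp
    thus ?thesis unfolding ra_rb_rd_def[symmetric] by simp
  next
    assume "(ra + rb) div P = 1"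
    hence s: "ra + rb = P + rd" using e by simp
    hence "ra + rb - rd = P" by simp
    moreover have "\<not> ra \<le> rd" using s lt by linarith
    ultimately show ?thesis unfolding ra_rb_rd_def[symmetric] using assms by simp
  qed
qed

lemma carry_eq:
  assumes "0 < p" "a \<le> d" "1 \<le> l" "l \<le> top_index p d"
  shows "carry p d a (d - a) l = (if a mod p ^ l \<le> d mod p ^ l then 0 else 1)"
proof -
  have "(\<Sum>j<l. (digit p a j + digit p (d - a) j) * p ^ j) = a mod p ^ l + (d - a) mod p ^ l"
    by (simp add: digit_sum distrib_right sum.distrib)
  hence "carry p d a (d - a) l = (a mod p ^ l + (d - a) mod p ^ l - d mod p ^ l) div p ^ l"
    unfolding carry_def using assms by (simp add: digit_sum)
  thus ?thesis using mod_carry[of "p ^ l" a d] assms by simp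
qed

lemma pat_iff:
  assumes "0 < p" "a \<le> d"
  shows "pat_le (carry p d a (d - a)) c \<longleftrightarrow>
         (\<forall>l. 1 \<le> l \<and> l \<le> top_index p d \<and> c l = 0 \<longrightarrow> a mod p ^ l \<le> d mod p ^ l)"
proof
  assume H: "pat_le (carry p d a (d - a)) c"
  show "\<forall>l. 1 \<le> l \<and> l \<le> top_index p d \<and> c l = 0 \<longrightarrow> a mod p ^ l \<le> d mod p ^ l"
  proof (intro allI impI)
    fix l assume l: "1 \<le> l \<and> l \<le> top_index p d \<and> c l = 0"
    have "carry p d a (d - a) l \<le> 0" using H l unfolding pat_le_def by metis
    thus "a mod p ^ l \<le> d mod p ^ l" using carry_eq[OF assms, of l] l by (auto split: if_splits)
  qed
next
  assume H: "\<forall>l. 1 \<le> l \<and> l \<le> top_index p d \<and> c l = 0 \<longrightarrow> a mod p ^ l \<le> d mod p ^ l"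
  show "pat_le (carry p d a (d - a)) c" unfolding pat_le_def
  proof
    fix i show "carry p d a (d - a) i \<le> c i"
    proof (cases "1 \<le> i \<and> i \<le> top_index p d")
      case True
      then show ?thesis using carry_eq[OF assms, of i] H by (cases "c i = 0") auto
    next
      case False
      then show ?thesis unfolding carry_def by auto
    qed
  qed
qed

lemma Z_iff:
  assumes "2 \<le> p"
  shows "(\<forall>l. 1 \<le> l \<and> l \<le> top_index p d \<and> c l = 0 \<longrightarrow> a mod p ^ l \<le> d mod p ^ l) \<longleftrightarrow>
         (\<forall>l\<in>Zset p d c. a mod p ^ l \<le> d mod p ^ l)"
proof
  assume H: "\<forall>l. 1 \<le> l \<and> l \<le> top_index p d \<and> c l = 0 \<longrightarrow> a mod p ^ l \<le> d mod p ^ l"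
  show "\<forall>l\<in>Zset p d c. a mod p ^ l \<le> d mod p ^ l"
  proof
    fix l assume "l \<in> Zset p d c"
    thus "a mod p ^ l \<le> d mod p ^ l" using H unfolding Zset_def by (cases "l = 0") auto
  qed
next
  assume H: "\<forall>l\<in>Zset p d c. a mod p ^ l \<le> d mod p ^ l"
  have "1 \<le> l \<longrightarrow> l \<le> top_index p d \<longrightarrow> c l = 0 \<longrightarrow> a mod p ^ l \<le> d mod p ^ l" for l
  proof (induction l rule: less_induct)
    case (less l)
    show ?case
    proof (intro impI)
      assume l: "1 \<le> l" "l \<le> top_index p d" "c l = 0"
      show "a mod p ^ l \<le> d mod p ^ l"
      proof (cases "l \<in> Zset p d c")
        case True thus ?thesis using H by blast
      next
        case False
        then obtain k where k: "l = Suc k" "c k = 0" "digit p d k = p - 1"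
          using l unfolding Zset_def by (cases l) auto
        have IH: "a mod p ^ k \<le> d mod p ^ k"
        proof (cases "k = 0")
          case True thus ?thesis by simp
        next
          case False thus ?thesis using less.IH[of k] k l by auto
        qed
        have "digit p a k < p" unfolding digit_def using assms by simp
        hence "digit p a k * p ^ k \<le> (p - 1) * p ^ k" by (intro mult_le_mono1) simp
        thus ?thesis unfolding k(1) mod_Suc_digit k(3) using IH by linarith
      qed
    qed
  qed
  thus "\<forall>l. 1 \<le> l \<and> l \<le> top_index p d \<and> c l = 0 \<longrightarrow> a mod p ^ l \<le> d mod p ^ l" by blast
qed

definition nxt :: "nat set \<Rightarrow> nat \<Rightarrow> nat \<Rightarrow> nat" where
  "nxt Z M t = (if \<exists>s\<in>Z. t < s then (LEAST s. s \<in> Z \<and> t < s) else M + 1)"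

lemma next_t_eq: "next_t p d c t = nxt (Zset p d c) (top_index p d) t"
  unfolding next_t_def nxt_def by simp

lemma nxt_props:
  assumes "Z \<subseteq> {..M}" "t \<in> Z"
  shows "t < nxt Z M t \<and> (nxt Z M t \<in> Z \<or> nxt Z M t = Suc M)"
proof (cases "\<exists>s\<in>Z. t < s")
  case True
  then obtain s where "s \<in> Z \<and> t < s" by blast
  hence "(LEAST s. s \<in> Z \<and> t < s) \<in> Z \<and> t < (LEAST s. s \<in> Z \<and> t < s)" by (rule LeastI)
  thus ?thesis using True unfolding nxt_def by simp
next
  case False
  thus ?thesis using assms unfolding nxt_def by auto
qed

lemma part:
  assumes "Z \<subseteq> {..M}" "0 \<in> Z"
  shows "l \<in> Z \<or> l = Suc M \<Longrightarrow>
    (\<Sum>t\<in>Z \<inter> {..<l}. \<Sum>k\<in>{t..<nxt Z M t}. f k) = (\<Sum>k<l. f k)"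
proof (induction l rule: less_induct)
  case (less l)
  show ?case
  proof (cases "l = 0")
    case True thus ?thesis by simp
  next
    case False
    define t0 where "t0 = Max (Z \<inter> {..<l})"
    have fin: "finite (Z \<inter> {..<l})" by auto
    have ne: "0 \<in> Z \<inter> {..<l}" using assms False by auto
    have "t0 \<in> Z \<inter> {..<l}" unfolding t0_def using fin ne by (intro Max_in) auto
    hence t0in: "t0 \<in> Z" "t0 < l" by auto
    have t0max: "s \<le> t0" if "s \<in> Z" "s < l" for s using Max_ge[OF fin] t0_def that by auto
    have nx: "nxt Z M t0 = l"
    proof (cases "l \<in> Z")
      case True
      have "\<exists>s\<in>Z. t0 < s" using True t0in by auto
      moreover have "(LEAST s. s \<in> Z \<and> t0 < s) = l"
      proof (rule Least_equality)
        show "l \<in> Z \<and> t0 < l" using True t0in by auto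
        fix s assume "s \<in> Z \<and> t0 < s"
        thus "l \<le> s" using t0max by (metis not_le)
      qed
      ultimately show ?thesis unfolding nxt_def by simp
    next
      case False
      with less.prems have l: "l = Suc M" by auto
      have "\<not>(\<exists>s\<in>Z. t0 < s)" using t0max assms(1) l by (metis atMost_iff le_imp_less_Suc not_le subsetD)
      thus ?thesis unfolding nxt_def l by simp
    qed
    have split: "Z \<inter> {..<l} = insert t0 (Z \<inter> {..<t0})"
      using t0in t0max by (auto simp: order.order_iff_strict)
    have "(\<Sum>t\<in>Z \<inter> {..<l}. \<Sum>k\<in>{t..<nxt Z M t}. f k)
        = (\<Sum>k\<in>{t0..<l}. f k) + (\<Sum>t\<in>Z \<inter> {..<t0}. \<Sum>k\<in>{t..<nxt Z M t}. f k)"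
      unfolding split using nx by simp
    also have "(\<Sum>t\<in>Z \<inter> {..<t0}. \<Sum>k\<in>{t..<nxt Z M t}. f k) = (\<Sum>k<t0. f k)"
      using less.IH[of t0] t0in by auto
    also have "(\<Sum>k\<in>{t0..<l}. f k) + (\<Sum>k<t0. f k) = (\<Sum>k<l. f k)"
      using sum.atLeastLessThan_concat[of 0 t0 l f] t0in by (simp add: atLeast0LessThan add.commute)
    finally show ?thesis .
  qed
qed

lemma cont_mult: "t \<le> e \<Longrightarrow> cont p x t e * p ^ t = (\<Sum>k\<in>{t..<e}. digit p x k * p ^ k)"
  unfolding cont_def sum_distrib_right
  by (intro sum.cong) (auto simp: mult.assoc power_add[symmetric])

lemma mod_cont: "t \<le> e \<Longrightarrow> x mod p ^ e = x mod p ^ t + cont p x t e * p ^ t"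
  unfolding cont_mult digit_sum
  using sum.atLeastLessThan_concat[of 0 t e "\<lambda>k. digit p x k * p ^ k"] by (simp add: atLeast0LessThan)

lemma part_cont:
  assumes "Z \<subseteq> {..M}" "0 \<in> Z" "l \<in> Z \<or> l = Suc M"
  shows "(\<Sum>t\<in>Z \<inter> {..<l}. cont p x t (nxt Z M t) * p ^ t) = x mod p ^ l"
proof -
  have "(\<Sum>t\<in>Z \<inter> {..<l}. cont p x t (nxt Z M t) * p ^ t)
      = (\<Sum>t\<in>Z \<inter> {..<l}. \<Sum>k\<in>{t..<nxt Z M t}. digit p x k * p ^ k)"
    using nxt_props[OF assms(1)] by (intro sum.cong refl cont_mult) (auto intro: less_imp_le)
  also have "\<dots> = x mod p ^ l" using part[OF assms] by (simp add: digit_sum)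
  finally show ?thesis .
qed

lemma comb:
  assumes p: "2 \<le> p" and Z: "Z \<subseteq> {..M}" "0 \<in> Z" and dl: "d < p ^ Suc M"
  shows "(a \<le> d \<and> (\<forall>l\<in>Z. a mod p ^ l \<le> d mod p ^ l)) \<longleftrightarrow>
         (\<exists>w. (\<forall>t\<in>Z. w t \<le> cont p d t (nxt Z M t)) \<and> a = (\<Sum>t\<in>Z. w t * p ^ t))"
proof -
  have finZ: "finite Z" using Z(1) finite_subset by blast
  have ZM: "Z \<inter> {..<Suc M} = Z" using Z(1) by auto
  have dsum: "(\<Sum>t\<in>Z. cont p d t (nxt Z M t) * p ^ t) = d"
    using part_cont[OF Z, where l="Suc M" and x=d and p=p] dl ZM by simp
  show ?thesis
  proof
    assume H: "a \<le> d \<and> (\<forall>l\<in>Z. a mod p ^ l \<le> d mod p ^ l)"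
    define w where "w t = cont p a t (nxt Z M t)" for t
    have "(\<Sum>t\<in>Z. w t * p ^ t) = a mod p ^ Suc M"
      using part_cont[OF Z, where l="Suc M" and x=a and p=p] ZM unfolding w_def by simp
    also have "\<dots> = a" using H dl by simp
    finally have asum: "a = (\<Sum>t\<in>Z. w t * p ^ t)" by simp
    have "w t \<le> cont p d t (nxt Z M t)" if t: "t \<in> Z" for t
    proof (rule ccontr)
      define e where "e = nxt Z M t"
      have te: "t < e" "e \<in> Z \<or> e = Suc M" using nxt_props[OF Z(1) t] e_def by auto
      have ae: "a mod p ^ e \<le> d mod p ^ e"
        using te(2) H dl by (auto simp: le_less_trans)
      have 1: "a mod p ^ e = a mod p ^ t + w t * p ^ t" unfolding w_def e_def[symmetric]
        using te by (intro mod_cont) simp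
      have 2: "d mod p ^ e = d mod p ^ t + cont p d t e * p ^ t"
        using te by (intro mod_cont) simp
      have 3: "d mod p ^ t < p ^ t" using p by simp
      assume "\<not> w t \<le> cont p d t (nxt Z M t)"
      hence "Suc (cont p d t e) \<le> w t" unfolding e_def by simp
      hence "Suc (cont p d t e) * p ^ t \<le> w t * p ^ t" by (rule mult_le_mono1)
      thus False using ae 1 2 3 by simp
    qed
    thus "\<exists>w. (\<forall>t\<in>Z. w t \<le> cont p d t (nxt Z M t)) \<and> a = (\<Sum>t\<in>Z. w t * p ^ t)"
      using asum by blast
  next
    assume "\<exists>w. (\<forall>t\<in>Z. w t \<le> cont p d t (nxt Z M t)) \<and> a = (\<Sum>t\<in>Z. w t * p ^ t)"
    then obtain w where w: "\<forall>t\<in>Z. w t \<le> cont p d t (nxt Z M t)" "a = (\<Sum>t\<in>Z. w t * p ^ t)" by blast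
    have le: "(\<Sum>t\<in>A. w t * p ^ t) \<le> (\<Sum>t\<in>A. cont p d t (nxt Z M t) * p ^ t)" if "A \<subseteq> Z" for A
      using w(1) that by (intro sum_mono mult_le_mono1) auto
    have "a \<le> d" using le[of Z] w(2) dsum by simp
    moreover have "a mod p ^ l \<le> d mod p ^ l" if l: "l \<in> Z" for l
    proof -
      define S1 where "S1 = (\<Sum>t\<in>Z \<inter> {..<l}. w t * p ^ t)"
      define S2 where "S2 = (\<Sum>t\<in>Z - {..<l}. w t * p ^ t)"
      have aS: "a = S1 + S2" unfolding S1_def S2_def w(2) using finZ by (simp add: sum.Int_Diff)
      have "p ^ l dvd S2" unfolding S2_def
        by (intro dvd_sum dvd_mult le_imp_power_dvd) auto
      then obtain k where k: "S2 = p ^ l * k" by blast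
      have "S1 \<le> d mod p ^ l" using le[of "Z \<inter> {..<l}"] part_cont[OF Z, where l=l and x=d and p=p] l unfolding S1_def by auto
      moreover have "d mod p ^ l < p ^ l" using p by simp
      ultimately have "a mod p ^ l = S1" unfolding aS k by simp
      thus ?thesis using \<open>S1 \<le> d mod p ^ l\<close> by simp
    qed
    ultimately show "a \<le> d \<and> (\<forall>l\<in>Z. a mod p ^ l \<le> d mod p ^ l)" by blast
  qed
qed

lemma Zset_sub: "Zset p d c \<subseteq> {..top_index p d}" and Zset_0: "0 \<in> Zset p d c"
  unfolding Zset_def by auto

lemma Aset_eq:
  assumes "2 \<le> p"
  shows "{a. a \<le> d \<and> pat_le (carry p d a (d - a)) c} =
         {a. \<exists>w. (\<forall>t\<in>Zset p d c. w t \<le> seg_cont p d c t) \<and> a = (\<Sum>t\<in>Zset p d c. w t * p ^ t)}"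
proof -
  have "a \<le> d \<and> pat_le (carry p d a (d - a)) c \<longleftrightarrow>
        (a \<le> d \<and> (\<forall>l\<in>Zset p d c. a mod p ^ l \<le> d mod p ^ l))" for a
    using pat_iff[of p a d c] Z_iff[OF assms, of d c a] assms by auto
  also have "\<dots> a \<longleftrightarrow> (\<exists>w. (\<forall>t\<in>Zset p d c. w t \<le> seg_cont p d c t) \<and> a = (\<Sum>t\<in>Zset p d c. w t * p ^ t))" for a
    unfolding seg_cont_def next_t_eq
    by (rule comb[OF assms Zset_sub Zset_0 d_lt[OF assms]])
  finally show ?thesis by blast
qed

lemma dsum_lemma: assumes "2 \<le> p"
  shows "(\<Sum>t\<in>Zset p d c. seg_cont p d c t * p ^ t) = d"
proof -
  have "Zset p d c \<inter> {..<Suc (top_index p d)} = Zset p d c" using Zset_sub[of p d c] by auto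
  thus ?thesis using part_cont[OF Zset_sub[of p d c] Zset_0[of p d c], where l="Suc (top_index p d)" and x=d and p=p] d_lt[OF assms, of d]
    unfolding seg_cont_def next_t_eq by simp
qed



lemma mon_eq: "(mon i j :: 'a::comm_ring_1 poly poly) = monom (monom 1 j) i"
proof -
  have "(varX :: 'a poly poly) ^ i = monom 1 i" unfolding varX_def by (simp add: monom_power)
  moreover have "(varY :: 'a poly poly) ^ j = monom (monom 1 j) 0"
    unfolding varY_def by (simp add: poly_const_pow monom_power monom_0)
  ultimately show ?thesis unfolding mon_def by (simp add: mult_monom)
qed

lemma mon_add: "mon (i + i') (j + j') = mon i j * mon i' j'"
  unfolding mon_def by (simp add: power_add ac_simps)

lemma mon_pow: "mon i j ^ q = mon (i * q) (j * q)"
  unfolding mon_def by (simp add: power_mult_distrib power_mult)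

lemma prod_mon: "(\<Prod>t\<in>T. mon (f t) (g t)) = mon (\<Sum>t\<in>T. f t) (\<Sum>t\<in>T. g t)"
  unfolding mon_def by (simp add: prod.distrib power_sum)

lemma cf_mon_mult:
  "coeff (coeff (mon a b * r) i) j =
     (if a \<le> i \<and> b \<le> j then coeff (coeff r (i - a)) (j - b) else (0::'a::comm_ring_1))"
  by (simp add: mon_eq coeff_monom_mult)

lemma cf_mon: "coeff (coeff (mon i j :: 'a::comm_ring_1 poly poly) i) j = 1"
  by (simp add: mon_eq)

lemma mon_mem:
  "(mon i j :: 'a::comm_ring_1 poly poly) \<in> ideal_gen {mon a (d - a) |a. a \<in> S} \<longleftrightarrow>
   (\<exists>a\<in>S. a \<le> i \<and> d - a \<le> j)"
proof
  assume "\<exists>a\<in>S. a \<le> i \<and> d - a \<le> j"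
  then obtain a where a: "a \<in> S" "a \<le> i" "d - a \<le> j" by blast
  have "(mon i j :: 'a poly poly) = mon (i - a) (j - (d - a)) * mon a (d - a)"
    using a by (simp add: mon_add[symmetric])
  also have "\<dots> \<in> ideal_gen {mon a (d - a) |a. a \<in> S}"
    using a by (intro ig_mult ig_mem) blast
  finally show "(mon i j :: 'a poly poly) \<in> ideal_gen {mon a (d - a) |a. a \<in> S}" .
next
  assume "(mon i j :: 'a poly poly) \<in> ideal_gen {mon a (d - a) |a. a \<in> S}"
  then obtain A r where A: "finite A" "A \<subseteq> {mon a (d - a) |a. a \<in> S}"
      "(mon i j :: 'a poly poly) = (\<Sum>g\<in>A. r g * g)"
    unfolding ideal_gen_def by blast
  show "\<exists>a\<in>S. a \<le> i \<and> d - a \<le> j"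
  proof (rule ccontr)
    assume N: "\<not> (\<exists>a\<in>S. a \<le> i \<and> d - a \<le> j)"
    have z: "coeff (coeff (r g * g) i) j = 0" if gA: "g \<in> A" for g
    proof -
      obtain a where "a \<in> S" "g = mon a (d - a)" using A(2) gA by blast
      thus ?thesis using N cf_mon_mult[of a "d - a" "r g" i j] by (auto simp: mult.commute)
    qed
    have "(1::'a) = coeff (coeff (mon i j :: 'a poly poly) i) j" by (simp add: cf_mon)
    also have "\<dots> = (\<Sum>g\<in>A. coeff (coeff (r g * g) i) j)" unfolding A(3) by (simp add: coeff_sum)
    also have "\<dots> = 0" using z by simp
    finally show False by simp
  qed
qed

lemma min_gens:
  assumes "S \<subseteq> {..d}"
  shows "min_mon_gens (ideal_gen {mon a (d - a) |a. a \<in> S} :: 'a::comm_ring_1 poly poly set)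
         = {(a, b). a + b = d \<and> a \<in> S}"
proof (rule set_eqI, clarify)
  fix i j
  show "(i, j) \<in> min_mon_gens (ideal_gen {mon a (d - a) |a. a \<in> S} :: 'a poly poly set) \<longleftrightarrow>
        (i, j) \<in> {(a, b). a + b = d \<and> a \<in> S}"
    unfolding min_mon_gens_def mem_Collect_eq case_prod_conv mon_mem
  proof
    assume H: "(\<exists>a\<in>S. a \<le> i \<and> d - a \<le> j) \<and>
      (\<forall>i' j'. i' \<le> i \<and> j' \<le> j \<and> (i', j') \<noteq> (i, j) \<longrightarrow> \<not> (\<exists>a\<in>S. a \<le> i' \<and> d - a \<le> j'))"
    then obtain a where a: "a \<in> S" "a \<le> i" "d - a \<le> j" by blast
    have "(a, d - a) = (i, j)" using H a by blast
    thus "i + j = d \<and> i \<in> S" using a assms by auto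
  next
    assume H: "i + j = d \<and> i \<in> S"
    show "(\<exists>a\<in>S. a \<le> i \<and> d - a \<le> j) \<and>
      (\<forall>i' j'. i' \<le> i \<and> j' \<le> j \<and> (i', j') \<noteq> (i, j) \<longrightarrow> \<not> (\<exists>a\<in>S. a \<le> i' \<and> d - a \<le> j'))"
    proof
      show "\<exists>a\<in>S. a \<le> i \<and> d - a \<le> j" using H by auto
      show "\<forall>i' j'. i' \<le> i \<and> j' \<le> j \<and> (i', j') \<noteq> (i, j) \<longrightarrow> \<not> (\<exists>a\<in>S. a \<le> i' \<and> d - a \<le> j')"
      proof (intro allI impI notI)
        fix i' j' assume 1: "i' \<le> i \<and> j' \<le> j \<and> (i', j') \<noteq> (i, j)" and "\<exists>a\<in>S. a \<le> i' \<and> d - a \<le> j'"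
        then obtain a where a: "a \<in> S" "a \<le> i'" "d - a \<le> j'" by blast
        have "a \<le> d" using a assms by auto
        thus False using 1 a H by auto
      qed
    qed
  qed
qed

lemma frob_add:
  assumes "prime p" "of_nat p = (0::'b::comm_ring_1)"
  shows "(x + y) ^ p = x ^ p + (y::'b) ^ p"
proof -
  have p0: "p \<noteq> 0" using assms(1) by auto
  have "(x + y) ^ p = (\<Sum>k\<le>p. of_nat (p choose k) * x ^ k * y ^ (p - k))" by (rule binomial_ring)
  also have "\<dots> = (\<Sum>k\<in>{0, p}. of_nat (p choose k) * x ^ k * y ^ (p - k))"
  proof (rule sum.mono_neutral_right)
    show "\<forall>k\<in>{..p} - {0, p}. of_nat (p choose k) * x ^ k * y ^ (p - k) = 0"
    proof
      fix k assume k: "k \<in> {..p} - {0, p}"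
      hence "p dvd (p choose k)" using assms(1) p0 by (intro dvd_choose_prime) auto
      then obtain m where "p choose k = p * m" by blast
      hence "of_nat (p choose k) = (0::'b)" using assms(2) by simp
      thus "of_nat (p choose k) * x ^ k * y ^ (p - k) = 0" by simp
    qed
  qed auto
  also have "\<dots> = x ^ p + y ^ p" using p0 by simp
  finally show ?thesis .
qed

lemma frob_add_pow:
  assumes "prime p" "of_nat p = (0::'b::comm_ring_1)"
  shows "(x + y) ^ (p ^ t) = x ^ (p ^ t) + (y::'b) ^ (p ^ t)"
proof (induction t)
  case 0 thus ?case by simp
next
  case (Suc t)
  have "(x + y) ^ (p ^ Suc t) = ((x + y) ^ (p ^ t)) ^ p" by (simp only: power_Suc2 power_mult)
  also have "\<dots> = (x ^ (p ^ t)) ^ p + (y ^ (p ^ t)) ^ p" unfolding Suc by (rule frob_add[OF assms])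
  finally show ?case by (simp only: power_Suc2 power_mult)
qed

lemma frob_sum:
  assumes add: "\<And>x y::'b::comm_ring_1. (x + y) ^ q = x ^ q + y ^ q" and q: "0 < q"
  shows "(\<Sum>i\<in>A. f i) ^ q = (\<Sum>i\<in>A. (f i :: 'b) ^ q)"
proof (cases "finite A")
  case True thus ?thesis by (induction A rule: finite_induct) (use q add in \<open>auto simp: power_0_left\<close>)
next
  case False thus ?thesis using q by (simp add: power_0_left)
qed

lemma frob_gen:
  assumes add: "\<And>x y::'b::comm_ring_1. (x + y) ^ q = x ^ q + y ^ q" and q: "0 < q"
  shows "frob_pow (ideal_gen G) q = ideal_gen ((\<lambda>f. (f::'b) ^ q) ` G)"
  unfolding frob_pow_def
proof (rule ig_eqI)
  show "(\<lambda>f. f ^ q) ` ideal_gen G \<subseteq> ideal_gen ((\<lambda>f. f ^ q) ` G)"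
  proof
    fix z assume "z \<in> (\<lambda>f. f ^ q) ` ideal_gen G"
    then obtain f where f: "f \<in> ideal_gen G" "z = f ^ q" by blast
    then obtain A r where A: "finite A" "A \<subseteq> G" "f = (\<Sum>g\<in>A. r g * g)"
      unfolding ideal_gen_def by blast
    have "z = (\<Sum>g\<in>A. r g ^ q * g ^ q)" unfolding f(2) A(3) frob_sum[OF add q]
      by (simp add: power_mult_distrib)
    also have "\<dots> \<in> ideal_gen ((\<lambda>f. f ^ q) ` G)"
    proof (rule ig_sum)
      show "finite A" by (rule A(1))
      fix i assume "i \<in> A"
      hence "i ^ q \<in> (\<lambda>f. f ^ q) ` G" using A(2) by blast
      thus "r i ^ q * i ^ q \<in> ideal_gen ((\<lambda>f. f ^ q) ` G)" by (rule ig_mult[OF ig_mem])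
    qed
    finally show "z \<in> ideal_gen ((\<lambda>f. f ^ q) ` G)" .
  qed
  show "(\<lambda>f. f ^ q) ` G \<subseteq> ideal_gen ((\<lambda>f. f ^ q) ` ideal_gen G)"
    using ig_mem[of _ G] by (auto intro!: ig_mem)
qed



lemma pow_max: "(ideal_pow max_ideal n :: 'a::comm_ring_1 poly poly set) = ideal_gen {mon i (n - i) |i. i \<le> n}"
proof -
  have "(ideal_pow max_ideal n :: 'a poly poly set) = ideal_prod {..<n} (\<lambda>t. ideal_gen ((\<lambda>_. {varX, varY}) t))"
    unfolding ideal_pow_def max_ideal_def by simp
  also have "\<dots> = ideal_gen {\<Prod>t\<in>{..<n}. g t | g. \<forall>t\<in>{..<n}. g t \<in> {varX, varY}}"
    by (rule ideal_prod_gen) simp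
  also have "{\<Prod>t\<in>{..<n}. g t | g. \<forall>t\<in>{..<n}. g t \<in> {varX, varY :: 'a poly poly}} = {mon i (n - i) |i. i \<le> n}"
  proof (rule set_eqI, rule iffI)
    fix z assume "z \<in> {\<Prod>t\<in>{..<n}. g t | g. \<forall>t\<in>{..<n}. g t \<in> {varX, varY :: 'a poly poly}}"
    then obtain g where g: "\<forall>t\<in>{..<n}. g t \<in> {varX, varY :: 'a poly poly}" "z = (\<Prod>t\<in>{..<n}. g t)"
      by (auto simp only: mem_Collect_eq)
    define B where "B = {t. g t = varX}"
    define k where "k = card ({..<n} \<inter> B)"
    have kn: "k \<le> n" unfolding k_def by (metis card_lessThan card_mono finite_lessThan inf_le1)
    have ck: "card ({..<n} - B) = n - k" unfolding k_def
      by (simp add: card_Diff_subset_Int)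
    have "z = (\<Prod>t\<in>{..<n} \<inter> B. g t) * (\<Prod>t\<in>{..<n} - B. g t)"
      unfolding g(2) by (rule prod.Int_Diff) simp
    also have "(\<Prod>t\<in>{..<n} \<inter> B. g t) = (\<Prod>t\<in>{..<n} \<inter> B. varX)"
      by (rule prod.cong) (auto simp: B_def)
    also have "(\<Prod>t\<in>{..<n} - B. g t) = (\<Prod>t\<in>{..<n} - B. varY)"
      using g(1) by (intro prod.cong) (auto simp: B_def)
    finally have zz: "z = (\<Prod>t\<in>{..<n} \<inter> B. varX) * (\<Prod>t\<in>{..<n} - B. varY)" .
    have "z = mon k (n - k)" using ck by (simp add: zz mon_def k_def)
    thus "z \<in> {(mon i (n - i) :: 'a poly poly) |i. i \<le> n}" using kn by blast
  next
    fix z assume "z \<in> {(mon i (n - i) :: 'a poly poly) |i. i \<le> n}"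
    then obtain i where i: "i \<le> n" "z = mon i (n - i)" by (auto simp only: mem_Collect_eq)
    define g where "g t = (if t < i then varX else varY :: 'a poly poly)" for t
    have "(\<Prod>t\<in>{..<n}. g t) = (\<Prod>t\<in>{..<n} \<inter> {..<i}. g t) * (\<Prod>t\<in>{..<n} - {..<i}. g t)"
      by (rule prod.Int_Diff) simp
    also have "{..<n} \<inter> {..<i} = {..<i}" using i by auto
    also have "{..<n} - {..<i} = {i..<n}" by auto
    also have "(\<Prod>t\<in>{..<i}. g t) = varX ^ i" unfolding g_def by simp
    also have "(\<Prod>t\<in>{i..<n}. g t) = varY ^ (n - i)" unfolding g_def by simp
    finally have "z = (\<Prod>t\<in>{..<n}. g t)" using i unfolding mon_def by simp
    moreover have "\<forall>t\<in>{..<n}. g t \<in> {varX, varY}" unfolding g_def by simp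
    ultimately have "\<exists>g'. z = (\<Prod>t\<in>{..<n}. g' t) \<and> (\<forall>t\<in>{..<n}. g' t \<in> {varX, varY})" by blast
    thus "z \<in> {\<Prod>t\<in>{..<n}. g t | g. \<forall>t\<in>{..<n}. g t \<in> {varX, varY}}" by (simp only: mem_Collect_eq)
  qed
  finally show ?thesis .
qed

theorem mainTheorem10:
  fixes p d :: nat and c :: "nat \<Rightarrow> nat"
  assumes "prime p"
    and "CHAR('a::alg_closed_field) = p"
    and "d \<ge> 1"
    and "c \<in> carry_patterns d p"
  shows "(Icd p d c :: 'a poly poly set) =
           ideal_prod (Zset p d c)
             (\<lambda>t. frob_pow (ideal_pow max_ideal (seg_cont p d c t)) (p ^ t))
       \<and> min_mon_gens (Icd p d c :: 'a poly poly set) =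
           {(a, b). a + b = d \<and>
              (\<exists>w. (\<forall>t\<in>Zset p d c. w t \<le> seg_cont p d c t) \<and>
                   a = (\<Sum>t\<in>Zset p d c. w t * p ^ t))}"
proof -
  have p2: "2 \<le> p" using assms(1) prime_ge_2_nat by auto
  have char0: "of_nat p = (0::'a poly poly)" using assms(2) by (simp add: of_nat_eq_0_iff_char_dvd)
  have addq: "(x + y) ^ (p ^ t) = x ^ (p ^ t) + y ^ (p ^ t)" for x y :: "'a poly poly" and t
    by (rule frob_add_pow[OF assms(1) char0])
  have frob: "frob_pow (ideal_gen G) (p ^ t) = ideal_gen ((\<lambda>f. f ^ (p ^ t)) ` G)"
    for G :: "'a poly poly set" and t
    by (rule frob_gen[where q="p ^ t", OF addq]) (use p2 in simp)
  define Z where "Z = Zset p d c"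
  define n where "n = seg_cont p d c"
  define Bs where "Bs = {a. \<exists>w. (\<forall>t\<in>Z. w t \<le> n t) \<and> a = (\<Sum>t\<in>Z. w t * p ^ t)}"
  have finZ: "finite Z" unfolding Z_def using Zset_sub[of p d c] finite_subset by blast
  have Aeq: "{a. a \<le> d \<and> pat_le (carry p d a (d - a)) c} = Bs"
    using Aset_eq[OF p2, of d c] unfolding Bs_def Z_def n_def .
  have Bsub: "Bs \<subseteq> {..d}" using Aeq by auto
  have dsum: "(\<Sum>t\<in>Z. n t * p ^ t) = d" using dsum_lemma[OF p2, of d c] unfolding Z_def n_def .
  have I1: "(Icd p d c :: 'a poly poly set) = ideal_gen {mon a (d - a) |a. a \<in> Bs}"
    unfolding Icd_def Aeq[symmetric]
  proof (rule arg_cong[where f=ideal_gen], rule set_eqI, rule iffI)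
    fix z assume "z \<in> {(mon a b :: 'a poly poly) |a b. a + b = d \<and> pat_le (carry p d a b) c}"
    then obtain a b where ab: "a + b = d" "pat_le (carry p d a b) c" "z = mon a b"
      by (auto simp only: mem_Collect_eq)
    hence "\<exists>a'. z = mon a' (d - a') \<and> a' \<in> {a. a \<le> d \<and> pat_le (carry p d a (d - a)) c}"
      by (intro exI[of _ a]) auto
    thus "z \<in> {mon a (d - a) |a. a \<in> {a. a \<le> d \<and> pat_le (carry p d a (d - a)) c}}"
      by (simp only: mem_Collect_eq)
  next
    fix z assume "z \<in> {(mon a (d - a) :: 'a poly poly) |a. a \<in> {a. a \<le> d \<and> pat_le (carry p d a (d - a)) c}}"
    then obtain a where ab: "a \<le> d" "pat_le (carry p d a (d - a)) c" "z = mon a (d - a)"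
      by (auto simp only: mem_Collect_eq)
    hence "\<exists>a' b'. z = mon a' b' \<and> a' + b' = d \<and> pat_le (carry p d a' b') c"
      by (intro exI[of _ a] exI[of _ "d - a"]) auto
    thus "z \<in> {mon a b |a b. a + b = d \<and> pat_le (carry p d a b) c}"
      by (simp only: mem_Collect_eq)
  qed
  have prodw: "(\<Prod>t\<in>Z. mon (w t) (n t - w t) ^ (p ^ t)) =
      (mon (\<Sum>t\<in>Z. w t * p ^ t) (d - (\<Sum>t\<in>Z. w t * p ^ t)) :: 'a poly poly)"
    if w: "\<forall>t\<in>Z. w t \<le> n t" for w
  proof -
    have "(\<Prod>t\<in>Z. mon (w t) (n t - w t) ^ (p ^ t)) =
          (\<Prod>t\<in>Z. (mon (w t * p ^ t) ((n t - w t) * p ^ t) :: 'a poly poly))"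
      by (simp add: mon_pow)
    also have "\<dots> = mon (\<Sum>t\<in>Z. w t * p ^ t) (\<Sum>t\<in>Z. (n t - w t) * p ^ t)" by (rule prod_mon)
    also have "(\<Sum>t\<in>Z. (n t - w t) * p ^ t) = d - (\<Sum>t\<in>Z. w t * p ^ t)"
    proof -
      have "(\<Sum>t\<in>Z. (n t - w t) * p ^ t) + (\<Sum>t\<in>Z. w t * p ^ t) = (\<Sum>t\<in>Z. n t * p ^ t)"
        unfolding sum.distrib[symmetric]
        by (rule sum.cong) (use w in \<open>auto simp: add_mult_distrib[symmetric]\<close>)
      thus ?thesis using dsum by simp
    qed
    finally show ?thesis .
  qed
  have gens: "{\<Prod>t\<in>Z. g t | g. \<forall>t\<in>Z. g t \<in> (\<lambda>f. f ^ (p ^ t)) ` {mon i (n t - i) |i. i \<le> n t}}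
      = {(mon a (d - a) :: 'a poly poly) |a. a \<in> Bs}"
  proof (rule set_eqI, rule iffI)
    fix z assume "z \<in> {\<Prod>t\<in>Z. g t | g. \<forall>t\<in>Z. g t \<in> (\<lambda>f. f ^ (p ^ t)) ` {(mon i (n t - i) :: 'a poly poly) |i. i \<le> n t}}"
    then obtain g where g: "\<forall>t\<in>Z. g t \<in> (\<lambda>f. f ^ (p ^ t)) ` {(mon i (n t - i) :: 'a poly poly) |i. i \<le> n t}"
        "z = (\<Prod>t\<in>Z. g t)" by (auto simp only: mem_Collect_eq)
    have "\<forall>t\<in>Z. \<exists>i. i \<le> n t \<and> g t = mon i (n t - i) ^ (p ^ t)" using g(1) by blast
    then obtain w where w: "\<forall>t\<in>Z. w t \<le> n t \<and> g t = mon (w t) (n t - w t) ^ (p ^ t)"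
      by (metis (no_types))
    have "z = (\<Prod>t\<in>Z. mon (w t) (n t - w t) ^ (p ^ t))" unfolding g(2) using w by (intro prod.cong) auto
    also have "\<dots> = mon (\<Sum>t\<in>Z. w t * p ^ t) (d - (\<Sum>t\<in>Z. w t * p ^ t))" using w by (intro prodw) auto
    finally have "z = mon (\<Sum>t\<in>Z. w t * p ^ t) (d - (\<Sum>t\<in>Z. w t * p ^ t))" .
    moreover have "(\<Sum>t\<in>Z. w t * p ^ t) \<in> Bs" unfolding Bs_def using w by blast
    ultimately show "z \<in> {mon a (d - a) |a. a \<in> Bs}" by blast
  next
    fix z assume "z \<in> {(mon a (d - a) :: 'a poly poly) |a. a \<in> Bs}"
    then obtain a where a: "a \<in> Bs" "z = mon a (d - a)" by blast
    then obtain w where w: "\<forall>t\<in>Z. w t \<le> n t" "a = (\<Sum>t\<in>Z. w t * p ^ t)" unfolding Bs_def by blast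
    have "z = (\<Prod>t\<in>Z. mon (w t) (n t - w t) ^ (p ^ t))" unfolding a(2) w(2) using prodw[OF w(1)] by simp
    moreover have "\<forall>t\<in>Z. mon (w t) (n t - w t) ^ (p ^ t) \<in> (\<lambda>f. f ^ (p ^ t)) ` {(mon i (n t - i) :: 'a poly poly) |i. i \<le> n t}"
      using w(1) by blast
    ultimately have "\<exists>g. z = (\<Prod>t\<in>Z. g t) \<and> (\<forall>t\<in>Z. g t \<in> (\<lambda>f. f ^ (p ^ t)) ` {(mon i (n t - i) :: 'a poly poly) |i. i \<le> n t})"
      by blast
    thus "z \<in> {\<Prod>t\<in>Z. g t | g. \<forall>t\<in>Z. g t \<in> (\<lambda>f. f ^ (p ^ t)) ` {mon i (n t - i) |i. i \<le> n t}}"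
      by (simp only: mem_Collect_eq)
  qed
  have I2: "ideal_prod Z (\<lambda>t. frob_pow (ideal_pow max_ideal (n t)) (p ^ t))
      = (ideal_gen {mon a (d - a) |a. a \<in> Bs} :: 'a poly poly set)"
    unfolding pow_max frob gens[symmetric] by (rule ideal_prod_gen[OF finZ])
  have M: "min_mon_gens (Icd p d c :: 'a poly poly set) = {(a, b). a + b = d \<and> a \<in> Bs}"
    unfolding I1 by (rule min_gens[OF Bsub])
  show ?thesis
    unfolding Z_def[symmetric] n_def[symmetric] using I1 I2 M unfolding Bs_def by simp
qed

end
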